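(* Let $m\ge3$, let $\lambda=\{\mu_{\mathbf a},\mu_{\mathbf b},\mu_{\mathbf c}\}$ be a D-J class over $P_m$ and $J=(j_1,\dots,j_m)\in\mathbb{Z}_{>0}^m$. Then $$|\tilde E(\lambda,J)|=(2^{|\mu_{\mathbf a}|-1})^{w_{\mathbf a}}+(2^{|\mu_{\mathbf b}|-1})^{w_{\mathbf b}}+(2^{|\mu_{\mathbf c}|-1})^{w_{\mathbf c}}-2,$$ where $w_i=0$ if $\mu_i=\varnothing$ and $w_i=\sum_{k\in\mu_i}(j_k-1)$ otherwise.
   Context: $P_m$ is the simplicial complex on $[m]$ with facets $\{i,i+1\}$ mod $m$. A D-J class over $P_m$ is an unordered weak partition $\lambda=\{\mu_{\mathbf a},\mu_{\mathbf b},\mu_{\mathbf c}\}$ of $[m]$ (parts may be empty) into non-consecutive sets (no part contains $\{i,i+1\bmod m\}$); $p,q$ are $\lambda$-equivalent if they lie in the same part. An e-set compatible with $\lambda$ is $(p,S)$ with $p\in[m]$, $S\subseteq[m]$ of even cardinality, and $\{p\}\cup S$ contained in one part. Two such e-sets $(p,S),(q,T)$ are type 1 $\lambda$-related if $S=\varnothing$ or $T=\varnothing$ or $p,q$ are $\lambda$-equivalent. $\tilde E(\lambda,J)$ is the set of sequences $(1,S^1_1),\dots,(1,S^1_{j_1-1}),(2,S^2_1),\dots,(2,S^2_{j_2-1}),\dots,(m,S^m_1),\dots,(m,S^m_{j_m-1})$ of e-sets compatible with $\lambda$ whose members are pairwise type 1 $\lambda$-related. *)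

theory Defs
  imports Main
begin

definition facet_Pm :: "nat \<Rightarrow> nat \<Rightarrow> nat \<Rightarrow> bool" where
  "facet_Pm m i j \<longleftrightarrow> (1 \<le> i \<and> i < m \<and> j = i + 1) \<or> (i = m \<and> j = 1)"

definition non_consecutive :: "nat \<Rightarrow> nat set \<Rightarrow> bool" where
  "non_consecutive m X \<longleftrightarrow> (\<forall>i j. facet_Pm m i j \<longrightarrow> \<not> ({i, j} \<subseteq> X))"

definition DJ_class :: "nat \<Rightarrow> nat set \<Rightarrow> nat set \<Rightarrow> nat set \<Rightarrow> bool" where
  "DJ_class m A B C \<longleftrightarrow>
     A \<union> B \<union> C = {1..m} \<and> A \<inter> B = {} \<and> A \<inter> C = {} \<and> B \<inter> C = {} \<and>
     non_consecutive m A \<and> non_consecutive m B \<and> non_consecutive m C"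

definition lam_equiv :: "nat set \<Rightarrow> nat set \<Rightarrow> nat set \<Rightarrow> nat \<Rightarrow> nat \<Rightarrow> bool" where
  "lam_equiv A B C p q \<longleftrightarrow> ({p, q} \<subseteq> A \<or> {p, q} \<subseteq> B \<or> {p, q} \<subseteq> C)"

definition eset_compat :: "nat \<Rightarrow> nat set \<Rightarrow> nat set \<Rightarrow> nat set \<Rightarrow> nat \<Rightarrow> nat set \<Rightarrow> bool" where
  "eset_compat m A B C p S \<longleftrightarrow>
     p \<in> {1..m} \<and> S \<subseteq> {1..m} \<and> even (card S) \<and>
     (insert p S \<subseteq> A \<or> insert p S \<subseteq> B \<or> insert p S \<subseteq> C)"

definition type1_related :: "nat set \<Rightarrow> nat set \<Rightarrow> nat set \<Rightarrow> nat \<times> nat set \<Rightarrow> nat \<times> nat set \<Rightarrow> bool" where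
  "type1_related A B C e f \<longleftrightarrow> snd e = {} \<or> snd f = {} \<or> lam_equiv A B C (fst e) (fst f)"

text \<open>Positions of the sequence: (k,i) with 1 <= k <= m and 1 <= i <= j_k - 1; the entry at
  position (k,i) is the e-set (k, S^k_i). A sequence is encoded by the function (k,i) \<mapsto> S^k_i,
  taken to be {} outside the positions (so that sequences correspond bijectively to such functions).\<close>
definition positions :: "nat \<Rightarrow> (nat \<Rightarrow> nat) \<Rightarrow> (nat \<times> nat) set" where
  "positions m J = {(k, i). k \<in> {1..m} \<and> 1 \<le> i \<and> i + 1 \<le> J k}"

definition E_tilde :: "nat \<Rightarrow> nat set \<Rightarrow> nat set \<Rightarrow> nat set \<Rightarrow> (nat \<Rightarrow> nat) \<Rightarrow> (nat \<times> nat \<Rightarrow> nat set) set" where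
  "E_tilde m A B C J =
     {f. (\<forall>x. x \<notin> positions m J \<longrightarrow> f x = {}) \<and>
         (\<forall>x \<in> positions m J. eset_compat m A B C (fst x) (f x)) \<and>
         (\<forall>x \<in> positions m J. \<forall>y \<in> positions m J.
            type1_related A B C (fst x, f x) (fst y, f y))}"

definition wt :: "nat set \<Rightarrow> (nat \<Rightarrow> nat) \<Rightarrow> nat" where
  "wt X J = (if X = {} then 0 else (\<Sum>k\<in>X. J k - 1))"

end

theory Submission
  imports Defs "HOL-Library.FuncSet"
begin

definition Ev :: "nat set \<Rightarrow> nat set set" where
  "Ev X = {S. S \<subseteq> X \<and> even (card S)}"
definition Od :: "nat set \<Rightarrow> nat set set" where
  "Od X = {S. S \<subseteq> X \<and> odd (card S)}"

lemma Ev_Od_ne: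
  assumes "finite X" "X \<noteq> {}"
  shows "card (Ev X) = 2 ^ (card X - 1) \<and> card (Od X) = 2 ^ (card X - 1)"
  using assms
proof (induction X rule: finite_ne_induct)
  case (singleton x)
  have "Ev {x} = {{}}" unfolding Ev_def by (auto simp: subset_singleton_iff)
  moreover have "Od {x} = {{x}}" unfolding Od_def by (auto simp: subset_singleton_iff)
  ultimately show ?case by simp
next
  case (insert x F)
  have fin: "\<And>S. S \<subseteq> F \<Longrightarrow> finite S" using insert(1) finite_subset by blast
  have e: "Ev (insert x F) = Ev F \<union> insert x ` Od F"
  proof
    show "Ev (insert x F) \<subseteq> Ev F \<union> insert x ` Od F"
    proof
      fix S assume S: "S \<in> Ev (insert x F)"
      show "S \<in> Ev F \<union> insert x ` Od F"
      proof (cases "x \<in> S")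
        case True
        have "S - {x} \<subseteq> F" using S unfolding Ev_def by auto
        moreover have "card (S - {x}) = card S - 1" using True by simp
        moreover have "card S \<ge> 1" using True \<open>S - {x} \<subseteq> F\<close> fin[of "S - {x}"]
          by (metis One_nat_def Suc_leI card_gt_0_iff empty_iff finite_Diff2 finite.emptyI finite_insert)
        ultimately have "S - {x} \<in> Od F" using S unfolding Ev_def Od_def by auto
        moreover have "S = insert x (S - {x})" using True by auto
        ultimately show ?thesis by blast
      next
        case False
        then show ?thesis using S unfolding Ev_def by auto
      qed
    qed
  next
    show "Ev F \<union> insert x ` Od F \<subseteq> Ev (insert x F)"
    proof
      fix S assume "S \<in> Ev F \<union> insert x ` Od F"
      then show "S \<in> Ev (insert x F)"
      proof
        assume "S \<in> Ev F" then show ?thesis unfolding Ev_def by auto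
      next
        assume "S \<in> insert x ` Od F"
        then obtain T where T: "T \<in> Od F" "S = insert x T" by blast
        have "x \<notin> T" using T insert(3) unfolding Od_def by auto
        moreover have "finite T" using T fin unfolding Od_def by auto
        ultimately show ?thesis using T unfolding Ev_def Od_def by auto
      qed
    qed
  qed
  have o: "Od (insert x F) = Od F \<union> insert x ` Ev F"
  proof
    show "Od (insert x F) \<subseteq> Od F \<union> insert x ` Ev F"
    proof
      fix S assume S: "S \<in> Od (insert x F)"
      show "S \<in> Od F \<union> insert x ` Ev F"
      proof (cases "x \<in> S")
        case True
        have "S - {x} \<subseteq> F" using S unfolding Od_def by auto
        moreover have "card (S - {x}) = card S - 1" using True by simp
        moreover have "card S \<ge> 1" using True \<open>S - {x} \<subseteq> F\<close> fin[of "S - {x}"]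
          by (metis One_nat_def Suc_leI card_gt_0_iff empty_iff finite_Diff2 finite.emptyI finite_insert)
        ultimately have "S - {x} \<in> Ev F" using S unfolding Ev_def Od_def by auto
        moreover have "S = insert x (S - {x})" using True by auto
        ultimately show ?thesis by blast
      next
        case False
        then show ?thesis using S unfolding Od_def by auto
      qed
    qed
  next
    show "Od F \<union> insert x ` Ev F \<subseteq> Od (insert x F)"
    proof
      fix S assume "S \<in> Od F \<union> insert x ` Ev F"
      then show "S \<in> Od (insert x F)"
      proof
        assume "S \<in> Od F" then show ?thesis unfolding Od_def by auto
      next
        assume "S \<in> insert x ` Ev F"
        then obtain T where T: "T \<in> Ev F" "S = insert x T" by blast
        have "x \<notin> T" using T insert(3) unfolding Ev_def by auto
        moreover have "finite T" using T fin unfolding Ev_def by auto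
        ultimately show ?thesis using T unfolding Ev_def Od_def by auto
      qed
    qed
  qed
  have finE: "finite (Ev F)" "finite (Od F)" using insert(1) unfolding Ev_def Od_def by auto
  have inj0: "inj_on (insert x) {S. S \<subseteq> F}"
    using insert(3) unfolding inj_on_def by (metis insert_ident mem_Collect_eq subsetD)
  have inj: "inj_on (insert x) (Ev F)" "inj_on (insert x) (Od F)"
    by (rule inj_on_subset[OF inj0], auto simp: Ev_def Od_def)+
  have d1: "Ev F \<inter> insert x ` Od F = {}" using insert(3) unfolding Ev_def by auto
  have d2: "Od F \<inter> insert x ` Ev F = {}" using insert(3) unfolding Od_def by auto
  have cF: "card F \<ge> 1" using insert(1,2) by (simp add: Suc_leI card_gt_0_iff)
  have "card (Ev (insert x F)) = card (Ev F) + card (Od F)"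
    unfolding e using card_Un_disjoint[OF finE(1) finite_imageI[OF finE(2)] d1]
      card_image[OF inj(2)] by simp
  moreover have "card (Od (insert x F)) = card (Od F) + card (Ev F)"
    unfolding o using card_Un_disjoint[OF finE(2) finite_imageI[OF finE(1)] d2]
      card_image[OF inj(1)] by simp
  moreover have "(2::nat) ^ (card F - 1) + 2 ^ (card F - 1) = 2 ^ (card (insert x F) - 1)"
    using insert(1,3) cF by (cases "card F") auto
  ultimately show ?case using insert(4) by simp
qed

lemma card_Ev:
  assumes "finite X"
  shows "card (Ev X) = 2 ^ (card X - 1)"
proof (cases "X = {}")
  case True
  then have "Ev X = {{}}" unfolding Ev_def by auto
  then show ?thesis using True by simp
next
  case False then show ?thesis using Ev_Od_ne assms by blast
qed

definition PX :: "nat \<Rightarrow> (nat \<Rightarrow> nat) \<Rightarrow> nat set \<Rightarrow> (nat \<times> nat) set" where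
  "PX m J X = {x \<in> positions m J. fst x \<in> X}"

definition FX :: "nat \<Rightarrow> (nat \<Rightarrow> nat) \<Rightarrow> nat set \<Rightarrow> (nat \<times> nat \<Rightarrow> nat set) set" where
  "FX m J X = {f. (\<forall>x. x \<notin> PX m J X \<longrightarrow> f x = {}) \<and> (\<forall>x \<in> PX m J X. f x \<in> Ev X)}"

lemma PX_eq:
  assumes "X \<subseteq> {1..m}"
  shows "PX m J X = Sigma X (\<lambda>k. {1..J k - 1})"
  using assms unfolding PX_def positions_def by auto

lemma card_PX:
  assumes "X \<subseteq> {1..m}"
  shows "card (PX m J X) = wt X J"
proof -
  have fX: "finite X" using assms finite_subset by blast
  show ?thesis unfolding PX_eq[OF assms] wt_def
    using card_SigmaI[OF fX, of "\<lambda>k. {1..J k - 1}"] by auto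
qed

lemma card_FX:
  assumes "X \<subseteq> {1..m}"
  shows "card (FX m J X) = (2 ^ (card X - 1)) ^ wt X J"
proof -
  have fX: "finite X" using assms finite_subset by blast
  have fP: "finite (PX m J X)" unfolding PX_eq[OF assms] using fX by auto
  have bij: "bij_betw (\<lambda>f. restrict f (PX m J X)) (FX m J X) (PiE (PX m J X) (\<lambda>_. Ev X))"
  proof (rule bij_betw_imageI)
    show "inj_on (\<lambda>f. restrict f (PX m J X)) (FX m J X)"
    proof (rule inj_onI)
      fix f g assume fg: "f \<in> FX m J X" "g \<in> FX m J X"
        "restrict f (PX m J X) = restrict g (PX m J X)"
      show "f = g"
      proof
        fix x show "f x = g x"
        proof (cases "x \<in> PX m J X")
          case True
          then show ?thesis using fun_cong[OF fg(3), of x] by simp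
        next
          case False
          then show ?thesis using fg(1,2) unfolding FX_def by blast
        qed
      qed
    qed
    show "(\<lambda>f. restrict f (PX m J X)) ` FX m J X = PiE (PX m J X) (\<lambda>_. Ev X)"
    proof
      show "(\<lambda>f. restrict f (PX m J X)) ` FX m J X \<subseteq> PiE (PX m J X) (\<lambda>_. Ev X)"
        unfolding FX_def by auto
      show "PiE (PX m J X) (\<lambda>_. Ev X) \<subseteq> (\<lambda>f. restrict f (PX m J X)) ` FX m J X"
      proof
        fix g assume g: "g \<in> PiE (PX m J X) (\<lambda>_. Ev X)"
        let ?f = "\<lambda>x. if x \<in> PX m J X then g x else {}"
        have fin: "?f \<in> FX m J X" using g unfolding FX_def by auto
        have req: "restrict ?f (PX m J X) = g"
        proof
          fix x show "restrict ?f (PX m J X) x = g x"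
          proof (cases "x \<in> PX m J X")
            case True then show ?thesis by simp
          next
            case False then show ?thesis using PiE_arb[OF g False] by simp
          qed
        qed
        show "g \<in> (\<lambda>f. restrict f (PX m J X)) ` FX m J X"
          by (rule image_eqI[where f="\<lambda>f. restrict f (PX m J X)", OF req[symmetric] fin])
      qed
    qed
  qed
  have "card (FX m J X) = card (PiE (PX m J X) (\<lambda>_. Ev X))" using bij_betw_same_card[OF bij] .
  also have "\<dots> = card (Ev X) ^ card (PX m J X)" using card_PiE[OF fP, of "\<lambda>_. Ev X"] by simp
  finally show ?thesis using card_Ev[OF fX] card_PX[OF assms] by simp
qed

lemma finite_FX:
  assumes "X \<subseteq> {1..m}"
  shows "finite (FX m J X)"
proof -
  have "card (FX m J X) > 0" using card_FX[OF assms] by simp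
  then show ?thesis using card_gt_0_iff by blast
qed

lemma zero_FX: "(\<lambda>_. {}) \<in> FX m J X"
  unfolding FX_def Ev_def by auto

lemma FX_inter:
  assumes "X \<inter> Y = {}"
  shows "FX m J X \<inter> FX m J Y = {\<lambda>_. {}}"
proof
  show "FX m J X \<inter> FX m J Y \<subseteq> {\<lambda>_. {}}"
  proof
    fix f assume f: "f \<in> FX m J X \<inter> FX m J Y"
    have "\<forall>x. f x = {}"
    proof
      fix x
      show "f x = {}"
      proof (cases "x \<in> PX m J X")
        case True
        then have "x \<notin> PX m J Y" using assms unfolding PX_def by auto
        then show ?thesis using f unfolding FX_def by blast
      next
        case False
        then show ?thesis using f unfolding FX_def by blast
      qed
    qed
    then show "f \<in> {\<lambda>_. {}}" by auto
  qed
  show "{\<lambda>_. {}} \<subseteq> FX m J X \<inter> FX m J Y" using zero_FX by auto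
qed

lemma E_eq:
  assumes "DJ_class m A B C"
  shows "E_tilde m A B C J = FX m J A \<union> FX m J B \<union> FX m J C"
proof -
  have parts: "A \<union> B \<union> C = {1..m}" "A \<inter> B = {}" "A \<inter> C = {}" "B \<inter> C = {}"
    using assms unfolding DJ_class_def by auto
  have uniq: "X = Y" if "X \<in> {A,B,C}" "Y \<in> {A,B,C}" "p \<in> X" "p \<in> Y" for X Y p
    using that parts by (auto simp: disjoint_iff)
  have key: "f \<in> FX m J X"
    if f: "f \<in> E_tilde m A B C J" and x0: "x0 \<in> positions m J" "f x0 \<noteq> {}"
      and X: "X \<in> {A,B,C}" "insert (fst x0) (f x0) \<subseteq> X" for f x0 X
  proof -
    have fE: "\<forall>x. x \<notin> positions m J \<longrightarrow> f x = {}"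
      "\<forall>x \<in> positions m J. eset_compat m A B C (fst x) (f x)"
      "\<forall>x \<in> positions m J. \<forall>y \<in> positions m J. type1_related A B C (fst x, f x) (fst y, f y)"
      using f unfolding E_tilde_def mem_Collect_eq by blast+
    have a: "f x = {}" if "x \<notin> PX m J X" for x
    proof (cases "x \<in> positions m J")
      case False then show ?thesis using fE(1) by blast
    next
      case True
      with that have nx: "fst x \<notin> X" unfolding PX_def by auto
      show ?thesis
      proof (rule ccontr)
        assume "f x \<noteq> {}"
        have "type1_related A B C (fst x0, f x0) (fst x, f x)"
          using fE(3) x0(1) True by blast
        then have "lam_equiv A B C (fst x0) (fst x)"
          using x0(2) \<open>f x \<noteq> {}\<close> unfolding type1_related_def by simp
        moreover have x0X: "fst x0 \<in> X" using X(2) by simp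
        ultimately show False unfolding lam_equiv_def
        proof (elim disjE)
          assume h: "{fst x0, fst x} \<subseteq> A"
          have "A = X" by (rule uniq[of A X "fst x0"]) (use h X(1) x0X in simp_all)
          then show False using h nx by simp
        next
          assume h: "{fst x0, fst x} \<subseteq> B"
          have "B = X" by (rule uniq[of B X "fst x0"]) (use h X(1) x0X in simp_all)
          then show False using h nx by simp
        next
          assume h: "{fst x0, fst x} \<subseteq> C"
          have "C = X" by (rule uniq[of C X "fst x0"]) (use h X(1) x0X in simp_all)
          then show False using h nx by simp
        qed
      qed
    qed
    have b: "f x \<in> Ev X" if "x \<in> PX m J X" for x
    proof -
      have xp: "x \<in> positions m J" "fst x \<in> X" using that unfolding PX_def by auto
      have ec: "eset_compat m A B C (fst x) (f x)" using fE(2) xp by auto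
      then obtain Y where Y: "Y \<in> {A,B,C}" "insert (fst x) (f x) \<subseteq> Y"
        unfolding eset_compat_def by auto
      then have "Y = X" using uniq[OF Y(1) X(1) _ xp(2)] by blast
      then show ?thesis using Y ec unfolding Ev_def eset_compat_def by auto
    qed
    show ?thesis unfolding FX_def using a b by auto
  qed
  show ?thesis
  proof
    show "E_tilde m A B C J \<subseteq> FX m J A \<union> FX m J B \<union> FX m J C"
    proof
      fix f assume f: "f \<in> E_tilde m A B C J"
      show "f \<in> FX m J A \<union> FX m J B \<union> FX m J C"
      proof (cases "\<exists>x0. f x0 \<noteq> {}")
        case False
        then have "f = (\<lambda>_. {})" by auto
        then show ?thesis using zero_FX by auto
      next
        case True
        then obtain x0 where x0: "f x0 \<noteq> {}" by auto
        then have xp: "x0 \<in> positions m J" using f unfolding E_tilde_def by blast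
        then have "eset_compat m A B C (fst x0) (f x0)" using f unfolding E_tilde_def by auto
        then obtain X where "X \<in> {A,B,C}" "insert (fst x0) (f x0) \<subseteq> X"
          unfolding eset_compat_def by auto
        then have "f \<in> FX m J X" using key[OF f xp x0] by blast
        then show ?thesis using \<open>X \<in> {A,B,C}\<close> by auto
      qed
    qed
    show "FX m J A \<union> FX m J B \<union> FX m J C \<subseteq> E_tilde m A B C J"
    proof
      fix f assume "f \<in> FX m J A \<union> FX m J B \<union> FX m J C"
      then obtain X where X: "X \<in> {A,B,C}" "f \<in> FX m J X" by auto
      have Xs: "X \<subseteq> {1..m}" using X(1) parts(1) by auto
      have f1: "\<forall>x. x \<notin> positions m J \<longrightarrow> f x = {}"
        using X(2) unfolding FX_def PX_def by blast
      have f2: "\<forall>x \<in> positions m J. eset_compat m A B C (fst x) (f x)"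
      proof
        fix x assume xp: "x \<in> positions m J"
        have fm: "fst x \<in> {1..m}" using xp unfolding positions_def by auto
        show "eset_compat m A B C (fst x) (f x)"
        proof (cases "x \<in> PX m J X")
          case True
          then have "f x \<in> Ev X" using X(2) unfolding FX_def by blast
          moreover have "fst x \<in> X" using True unfolding PX_def by simp
          ultimately show ?thesis using fm Xs X(1) unfolding eset_compat_def Ev_def by auto
        next
          case False
          then have "f x = {}" using X(2) unfolding FX_def by blast
          moreover have "fst x \<in> A \<or> fst x \<in> B \<or> fst x \<in> C" using fm parts(1) by auto
          ultimately show ?thesis using fm unfolding eset_compat_def by auto
        qed
      qed
      have f3: "\<forall>x \<in> positions m J. \<forall>y \<in> positions m J.
            type1_related A B C (fst x, f x) (fst y, f y)"
      proof (intro ballI)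
        fix x y assume "x \<in> positions m J" "y \<in> positions m J"
        show "type1_related A B C (fst x, f x) (fst y, f y)"
        proof (cases "f x = {} \<or> f y = {}")
          case True then show ?thesis unfolding type1_related_def by auto
        next
          case False
          then have "x \<in> PX m J X" "y \<in> PX m J X" using X(2) unfolding FX_def by blast+
          then have "fst x \<in> X" "fst y \<in> X" unfolding PX_def by auto
          then show ?thesis using X(1) unfolding type1_related_def lam_equiv_def by auto
        qed
      qed
      show "f \<in> E_tilde m A B C J" unfolding E_tilde_def using f1 f2 f3 by auto
    qed
  qed
qed

theorem proposition6:
  fixes m :: nat and A B C :: "nat set" and J :: "nat \<Rightarrow> nat"
  assumes "m \<ge> 3"
    and "DJ_class m A B C"
    and "\<forall>k \<in> {1..m}. J k > 0"
  shows "card (E_tilde m A B C J) =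
           (2 ^ (card A - 1)) ^ wt A J + (2 ^ (card B - 1)) ^ wt B J
           + (2 ^ (card C - 1)) ^ wt C J - 2"
proof -
  have parts: "A \<union> B \<union> C = {1..m}" "A \<inter> B = {}" "A \<inter> C = {}" "B \<inter> C = {}"
    using assms(2) unfolding DJ_class_def by auto
  have s: "A \<subseteq> {1..m}" "B \<subseteq> {1..m}" "C \<subseteq> {1..m}" using parts(1) by auto
  note fin = finite_FX[OF s(1)] finite_FX[OF s(2)] finite_FX[OF s(3)]
  have i1: "FX m J A \<inter> FX m J B = {\<lambda>_. {}}" using FX_inter[OF parts(2)] .
  have i2: "(FX m J A \<union> FX m J B) \<inter> FX m J C = {\<lambda>_. {}}"
    using FX_inter[OF parts(3)] FX_inter[OF parts(4)] by blast
  have c1: "card (FX m J A \<union> FX m J B) + 1 = card (FX m J A) + card (FX m J B)"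
    using card_Un_Int[OF fin(1) fin(2)] i1 by simp
  have c2: "card (FX m J A \<union> FX m J B \<union> FX m J C) + 1
      = card (FX m J A \<union> FX m J B) + card (FX m J C)"
    using card_Un_Int[OF finite_UnI[OF fin(1) fin(2)] fin(3)] i2 by simp
  show ?thesis unfolding E_eq[OF assms(2)] card_FX[OF s(1), symmetric]
      card_FX[OF s(2), symmetric] card_FX[OF s(3), symmetric]
    using c1 c2 by simp
qed

end
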